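(* Let $B\in\mathbb{R}^{r\times q}$ have orthonormal rows, with columns $b_1,\dots,b_q$, and let $\hat c_{ik}\in\{-1,+1\}$ be arbitrary signs. Let $\hat U\in\mathbb{R}^{n\times r}$ be a minimizer of $$\tilde U\mapsto\sum_{k=1}^q\sum_{i=1}^m\big(\hat c_{ik}y_{ik}-a_{ik}'\tilde U b_k\big)^2,$$ and let $\hat U = U^+R_U$ be a QR decomposition with $U^+\in\mathbb{R}^{n\times r}$ having orthonormal columns. Define, for $W\in\mathbb{R}^{n\times r}$, $$\mathrm{Term1}(W)=\sum_{i,k}b_k'W'a_{ik}a_{ik}'U^*(\tilde B^*B'b_k-\tilde b_k^* ),\quad \mathrm{Term2}(W)=\sum_{i,k}(c_{ik}\hat c_{ik}-1)(a_{ik}'Wb_k)(a_{ik}'x_k^* ),$$ $$\mathrm{Term3}(W)=\sum_{i,k}(a_{ik}'Wb_k)^2,$$ let $\mathcal{S}_W=\{W\in\mathbb{R}^{n\times r}:\|W\|_F=1\}$, and $$\mathrm{MainTerm}=\frac{\max_{W\in\mathcal{S}_W}|\mathrm{Term1}(W)|+\max_{W\in\mathcal{S}_W}|\mathrm{Term2}(W)|}{\min_{W\in\mathcal{S}_W}\mathrm{Term3}(W)}.$$ Assume $\min_{W\in\mathcal{S}_W}\mathrm{Term3}(W)>0$ (so the minimizer $\hat U$ is unique) and $\sigma_{\min}(U^*\Sigma^*B^*B')>\mathrm{MainTerm}$. Then $$\mathrm{SE}(U^+,U^* )\le\frac{\mathrm{MainTerm}}{\sigma_{\min}(U^*\Si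gma^*B^*B')-\mathrm{MainTerm}}.$$
   Context: $X^*=[x_1^*,\dots,x_q^*]\in\mathbb{R}^{n\times q}$ has rank $r$ with reduced SVD $X^*=U^*\Sigma^*B^*$, where $U^*\in\mathbb{R}^{n\times r}$ has orthonormal columns, $\Sigma^*\in\mathbb{R}^{r\times r}$ is diagonal positive, $B^*\in\mathbb{R}^{r\times q}$ has orthonormal rows; $\tilde B^*=\Sigma^*B^*$ with columns $\tilde b_k^*$, so $x_k^*=U^*\tilde b_k^*$. The vectors $a_{ik}\in\mathbb{R}^n$ ($i\in[m],k\in[q]$) are arbitrary (deterministic), $y_{ik}=|a_{ik}'x_k^*|$, and $c_{ik}\in\{-1,+1\}$ is the sign of $a_{ik}'x_k^*$ (any choice if it is zero), so $y_{ik}=c_{ik}a_{ik}'x_k^*$. $\sigma_{\min}(\cdot)$ is the $r$-th (smallest of the top $r$) singular value of an $n\times r$ matrix. For matrices $U_1,U_2$ with orthonormal columns, $\mathrm{SE}(U_1,U_2)=\|(I-U_1U_1')U_2\|$. *)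

theory Defs
  imports "HOL-Analysis.Analysis"
begin

text \<open>Matrices are HOL-Analysis matrices: an n x r real matrix is a value of type
  real^'r^'n (rows indexed by 'n, columns by 'r). The Euclidean norm on this type is
  the Frobenius norm.\<close>

definition orthonormal_cols :: "real^'r^'n \<Rightarrow> bool" where
  "orthonormal_cols U \<longleftrightarrow> transpose U ** U = mat 1"

definition orthonormal_rows :: "real^'q^'r \<Rightarrow> bool" where
  "orthonormal_rows B \<longleftrightarrow> B ** transpose B = mat 1"

definition upper_triangular_mat :: "real^('r::{finite,linorder})^('r::{finite,linorder}) \<Rightarrow> bool" where
  "upper_triangular_mat R \<longleftrightarrow> (\<forall>i j. j < i \<longrightarrow> R $ i $ j = 0)"

definition spec_norm :: "real^'a^'b \<Rightarrow> real" where
  "spec_norm M = onorm (\<lambda>x. M *v x)"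

text \<open>r-th singular value of an n x r matrix (variational characterization):
  the minimum of |Mx| over unit vectors x in R^r.\<close>
definition sigma_min :: "real^'r^'n \<Rightarrow> real" where
  "sigma_min M = Inf {norm (M *v x) | x. norm x = 1}"

definition SE :: "real^'r^'n \<Rightarrow> real^'s^'n \<Rightarrow> real" where
  "SE U1 U2 = spec_norm ((mat 1 - U1 ** transpose U1) ** U2)"

end

theory Submission
  imports Defs
begin


lemma frob_le: "norm ((A::real^'m^'n) *v x) \<le> norm A * norm x"
proof -
  have "(norm (A *v x))\<^sup>2 = (\<Sum>i\<in>UNIV. ((A *v x)$i)\<^sup>2)"
    unfolding power2_norm_eq_inner inner_vec_def by (simp add: power2_eq_square)
  also have "\<dots> \<le> (\<Sum>i\<in>UNIV. (norm (A$i))\<^sup>2 * (norm x)\<^sup>2)"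
  proof (rule sum_mono)
    fix i
    have "\<bar>(A *v x)$i\<bar> \<le> norm (A$i) * norm x"
      by (simp add: matrix_vector_mul_component Cauchy_Schwarz_ineq2)
    then have "\<bar>(A *v x)$i\<bar>\<^sup>2 \<le> (norm (A$i) * norm x)\<^sup>2"
      by (rule power_mono) simp
    then show "((A *v x)$i)\<^sup>2 \<le> (norm (A$i))\<^sup>2 * (norm x)\<^sup>2"
      by (simp add: power_mult_distrib)
  qed
  also have "\<dots> = (norm A)\<^sup>2 * (norm x)\<^sup>2"
  proof -
    have "(norm A)\<^sup>2 = (\<Sum>i\<in>UNIV. (norm (A$i))\<^sup>2)"
      unfolding power2_norm_eq_inner inner_vec_def ..
    then show ?thesis by (simp add: sum_distrib_right)
  qed
  also have "\<dots> = (norm A * norm x)\<^sup>2" by (simp add: power_mult_distrib)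
  finally show ?thesis by (rule power2_le_imp_le) simp
qed

lemma scaleR_mv: "((t::real) *\<^sub>R (W::real^'m^'n)) *v v = t *\<^sub>R (W *v v)"
  by (simp add: vec_eq_iff matrix_vector_mult_def sum_distrib_left mult.assoc)

lemma inner_mv: "((A::real^'m^'n) *v x) \<bullet> y = x \<bullet> (transpose A *v y)"
  by (metis dot_lmul_matrix vector_transpose_matrix)

lemma column_mult: "column k ((A::real^'m^'n) ** M) = A *v column k M"
  by (simp add: vec_eq_iff column_def matrix_matrix_mult_def matrix_vector_mult_def)

lemma lin_bound:
  fixes a :: "'m::finite \<Rightarrow> 'q::finite \<Rightarrow> real^'n" and bb :: "'q \<Rightarrow> real^'r"
  shows "\<bar>\<Sum>i\<in>UNIV. \<Sum>k\<in>UNIV. (a i k \<bullet> ((W::real^'r^'n) *v bb k)) * g i k\<bar>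
     \<le> (\<Sum>i\<in>UNIV. \<Sum>k\<in>UNIV. norm (a i k) * norm (bb k) * \<bar>g i k\<bar>) * norm W"
proof -
  have "\<bar>\<Sum>i\<in>UNIV. \<Sum>k\<in>UNIV. (a i k \<bullet> (W *v bb k)) * g i k\<bar>
      \<le> (\<Sum>i\<in>UNIV. \<Sum>k\<in>UNIV. \<bar>(a i k \<bullet> (W *v bb k)) * g i k\<bar>)"
    by (rule order_trans[OF sum_abs sum_mono]) (rule sum_abs)
  also have "\<dots> \<le> (\<Sum>i\<in>UNIV. \<Sum>k\<in>UNIV. norm (a i k) * norm (bb k) * \<bar>g i k\<bar> * norm W)"
  proof (intro sum_mono)
    fix i k
    have "\<bar>a i k \<bullet> (W *v bb k)\<bar> \<le> norm (a i k) * norm (W *v bb k)"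
      by (rule Cauchy_Schwarz_ineq2)
    also have "\<dots> \<le> norm (a i k) * (norm W * norm (bb k))"
      by (rule mult_left_mono[OF frob_le]) simp
    finally have "\<bar>a i k \<bullet> (W *v bb k)\<bar> * \<bar>g i k\<bar> \<le> norm (a i k) * (norm W * norm (bb k)) * \<bar>g i k\<bar>"
      by (rule mult_right_mono) simp
    then show "\<bar>(a i k \<bullet> (W *v bb k)) * g i k\<bar> \<le> norm (a i k) * norm (bb k) * \<bar>g i k\<bar> * norm W"
      by (simp add: abs_mult algebra_simps)
  qed
  also have "\<dots> = (\<Sum>i\<in>UNIV. \<Sum>k\<in>UNIV. norm (a i k) * norm (bb k) * \<bar>g i k\<bar>) * norm W"
    by (simp add: sum_distrib_right)
  finally show ?thesis .
qed

lemma proj_le: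
  fixes U :: "real^'r^'n"
  assumes "transpose U ** U = mat 1"
  shows "norm (v - U *v (transpose U *v v)) \<le> norm v"
proof -
  define w where "w = transpose U *v v"
  have pp: "(U *v w) \<bullet> (U *v w) = w \<bullet> w"
    by (simp add: inner_mv matrix_vector_mul_assoc assms)
  have pv: "(U *v w) \<bullet> v = w \<bullet> w"
    by (simp add: inner_mv w_def)
  have "(norm v)\<^sup>2 = (norm (v - U *v w))\<^sup>2 + (norm (U *v w))\<^sup>2"
    using pp pv by (simp add: power2_norm_eq_inner inner_diff_left inner_diff_right inner_commute)
  then have "(norm (v - U *v w))\<^sup>2 \<le> (norm v)\<^sup>2" by simp
  then show ?thesis unfolding w_def by (rule power2_le_imp_le) simp
qed

lemma isom:
  fixes U :: "real^'r^'n"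
  assumes "transpose U ** U = mat 1"
  shows "norm (U *v w) = norm w"
proof -
  have "(U *v w) \<bullet> (U *v w) = w \<bullet> w"
    by (simp add: inner_mv matrix_vector_mul_assoc assms)
  then show ?thesis by (simp add: norm_eq_sqrt_inner)
qed



theorem mainTheorem6:
  fixes Xstar :: "real^'q::finite^'n::finite"
    and Ustar :: "real^('r::{finite,linorder})^'n"
    and Sigma :: "real^('r::{finite,linorder})^('r::{finite,linorder})"
    and Bstar :: "real^'q^('r::{finite,linorder})"
    and a :: "'m::finite \<Rightarrow> 'q \<Rightarrow> real^'n"
    and y c chat :: "'m \<Rightarrow> 'q \<Rightarrow> real"
    and B :: "real^'q^('r::{finite,linorder})"
    and Uhat Uplus :: "real^('r::{finite,linorder})^'n"
    and RU :: "real^('r::{finite,linorder})^('r::{finite,linorder})"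
    and Term1 Term2 Term3 :: "real^('r::{finite,linorder})^'n \<Rightarrow> real"
    and MainTerm :: real
  assumes Xstar_rank: "rank Xstar = CARD('r::{finite,linorder})"
    and svd: "Xstar = Ustar ** Sigma ** Bstar"
    and Ustar_on: "orthonormal_cols Ustar"
    and Sigma_diag: "\<forall>i j. i \<noteq> j \<longrightarrow> Sigma $ i $ j = 0"
    and Sigma_pos: "\<forall>i. Sigma $ i $ i > 0"
    and Bstar_on: "orthonormal_rows Bstar"
    and y_def: "\<forall>i k. y i k = \<bar>a i k \<bullet> column k Xstar\<bar>"
    and c_sign: "\<forall>i k. c i k \<in> {-1, 1} \<and> y i k = c i k * (a i k \<bullet> column k Xstar)"
    and B_on: "orthonormal_rows B"
    and chat_sign: "\<forall>i k. chat i k \<in> {-1, 1}"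
    and Uhat_min: "\<forall>U :: real^('r::{finite,linorder})^'n.
          (\<Sum>k\<in>UNIV. \<Sum>i\<in>UNIV. (chat i k * y i k - a i k \<bullet> (Uhat *v column k B))\<^sup>2)
          \<le> (\<Sum>k\<in>UNIV. \<Sum>i\<in>UNIV. (chat i k * y i k - a i k \<bullet> (U *v column k B))\<^sup>2)"
    and QR: "Uhat = Uplus ** RU" "orthonormal_cols Uplus" "upper_triangular_mat RU"
    and Term1_def: "\<forall>W. Term1 W = (\<Sum>i\<in>UNIV. \<Sum>k\<in>UNIV.
          (a i k \<bullet> (W *v column k B)) *
          (a i k \<bullet> (Ustar *v ((Sigma ** Bstar) ** transpose B *v column k B
                                - column k (Sigma ** Bstar)))))"
    and Term2_def: "\<forall>W. Term2 W = (\<Sum>i\<in>UNIV. \<Sum>k\<in>UNIV.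
          (c i k * chat i k - 1) * (a i k \<bullet> (W *v column k B)) * (a i k \<bullet> column k Xstar))"
    and Term3_def: "\<forall>W. Term3 W = (\<Sum>i\<in>UNIV. \<Sum>k\<in>UNIV. (a i k \<bullet> (W *v column k B))\<^sup>2)"
    and MainTerm_def: "MainTerm =
          (Sup {\<bar>Term1 W\<bar> | W. norm W = 1} + Sup {\<bar>Term2 W\<bar> | W. norm W = 1})
          / Inf {Term3 W | W. norm W = 1}"
    and Term3_pos: "Inf {Term3 W | W. norm W = 1} > 0"
    and gap: "sigma_min (Ustar ** Sigma ** Bstar ** transpose B) > MainTerm"
  shows "SE Uplus Ustar
           \<le> MainTerm / (sigma_min (Ustar ** Sigma ** Bstar ** transpose B) - MainTerm)"

proof -
  define bk where "bk k = column k B" for k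
  define G where "G = Ustar ** Sigma ** Bstar ** transpose B"
  define M where "M = Sigma ** Bstar ** transpose B"
  define P where "P v = Uplus *v (transpose Uplus *v v)" for v
  have GM: "G = Ustar ** M" by (simp add: G_def M_def matrix_mul_assoc)
  have xs_eq: "column k Xstar = Ustar *v column k (Sigma ** Bstar)" for k
    by (metis column_mult matrix_mul_assoc svd)
  \<comment> \<open>first-order optimality\<close>
  have normal: "(\<Sum>k\<in>UNIV. \<Sum>i\<in>UNIV. (chat i k * y i k - a i k \<bullet> (Uhat *v bk k)) * (a i k \<bullet> (W *v bk k))) = 0" for W
  proof -
    define L where "L = (\<Sum>k\<in>UNIV. \<Sum>i\<in>UNIV. (chat i k * y i k - a i k \<bullet> (Uhat *v bk k)) * (a i k \<bullet> (W *v bk k)))"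
    define Q where "Q = (\<Sum>k\<in>UNIV. \<Sum>i\<in>UNIV. (a i k \<bullet> (W *v bk k))\<^sup>2)"
    define F0 where "F0 = (\<Sum>k\<in>UNIV. \<Sum>i\<in>UNIV. (chat i k * y i k - a i k \<bullet> (Uhat *v bk k))\<^sup>2)"
    have pt: "(cc - (u + t*p))\<^sup>2 = (cc-u)\<^sup>2 - 2*t*((cc-u)*p) + t\<^sup>2*p\<^sup>2" for cc u p t :: real
      by (simp add: power2_eq_square algebra_simps)
    have expand: "(\<Sum>k\<in>UNIV. \<Sum>i\<in>UNIV. (chat i k * y i k - a i k \<bullet> ((Uhat + t *\<^sub>R W) *v bk k))\<^sup>2)
        = F0 - 2*t*L + t\<^sup>2*Q" for t
      by (simp add: F0_def L_def Q_def matrix_vector_mult_add_rdistrib scaleR_mv inner_add_right pt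
          sum.distrib sum_subtractf sum_distrib_left)
    have ineq: "0 \<le> - 2*t*L + t\<^sup>2*Q" for t
      using Uhat_min[rule_format, of "Uhat + t *\<^sub>R W"] expand[of t] unfolding F0_def bk_def by simp
    have Q0: "Q \<ge> 0" by (simp add: Q_def sum_nonneg)
    have Q1: "Q + 1 \<noteq> 0" using Q0 by linarith
    define t where "t = L/(Q+1)"
    have tQ: "t*(Q+1) = L" using Q1 by (simp add: t_def)
    have "(Q+1)\<^sup>2 * (- 2*t*L + t\<^sup>2*Q) = - 2*L*(t*(Q+1))*(Q+1) + (t*(Q+1))\<^sup>2*Q"
      by (simp add: power2_eq_square algebra_simps)
    then have eq: "(Q+1)\<^sup>2 * (- 2*t*L + t\<^sup>2*Q) = - 2*L*L*(Q+1) + L*L*Q"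
      unfolding tQ by (simp add: power2_eq_square)
    have "0 \<le> (Q+1)\<^sup>2 * (- 2*t*L + t\<^sup>2*Q)"
      using ineq[of t] by simp
    then have "0 \<le> - 2*L*L*(Q+1) + L*L*Q" using eq by simp
    then have "L*L*(Q+2) \<le> 0" by (simp add: algebra_simps)
    moreover have "L*L*(Q+2) \<ge> 0" using Q0 by simp
    ultimately have "L*L*(Q+2) = 0" by linarith
    then show ?thesis using Q0 unfolding L_def[symmetric] by simp
  qed
  define D where "D = Uhat - G"
  have key: "Term3 D = Term2 D - Term1 D"
  proof -
    have e1: "Ustar *v ((Sigma ** Bstar) ** transpose B *v bk k - column k (Sigma ** Bstar)) = G *v bk k - column k Xstar" for k
      using GM xs_eq by (simp add: matrix_vector_mult_diff_distrib matrix_vector_mul_assoc M_def)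
    have e1a: "Ustar *v ((Sigma ** Bstar) ** transpose B *v bk k) = G *v bk k" for k
      using GM by (simp add: matrix_vector_mul_assoc M_def)
    have e2: "Uhat *v bk k = G *v bk k + D *v bk k" for k by (simp add: D_def matrix_vector_mult_diff_rdistrib)
    have e3: "chat i k * y i k = chat i k * c i k * (a i k \<bullet> column k Xstar)" for i k
      using c_sign by simp
    have "Term2 D - Term1 D - Term3 D = (\<Sum>i\<in>UNIV. \<Sum>k\<in>UNIV. (chat i k * y i k - a i k \<bullet> (Uhat *v bk k)) * (a i k \<bullet> (D *v bk k)))"
      unfolding Term1_def[rule_format] Term2_def[rule_format] Term3_def[rule_format] bk_def[symmetric]
        sum_subtractf[symmetric]
      by (intro sum.cong refl) (simp add: e1a xs_eq[symmetric] e2 e3 inner_diff_right inner_add_right algebra_simps power2_eq_square)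
    also have "\<dots> = 0" using normal[of D] by (subst sum.swap) simp
    finally show ?thesis by simp
  qed
  define S1 where "S1 = Sup {\<bar>Term1 W\<bar> | W. norm W = 1}"
  define S2 where "S2 = Sup {\<bar>Term2 W\<bar> | W. norm W = 1}"
  define m where "m = Inf {Term3 W | W. norm W = 1}"
  obtain W0 :: "real^('r::{finite,linorder})^'n" where W0: "norm W0 = 1" using vector_choose_size[of 1] by auto
  define C1 where "C1 = (\<Sum>i\<in>UNIV. \<Sum>k\<in>UNIV. norm (a i k) * norm (bk k) *
       \<bar>a i k \<bullet> (Ustar *v ((Sigma ** Bstar) ** transpose B *v column k B - column k (Sigma ** Bstar)))\<bar>)"
  define C2 where "C2 = (\<Sum>i\<in>UNIV. \<Sum>k\<in>UNIV. norm (a i k) * norm (bk k) *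
       \<bar>(c i k * chat i k - 1) * (a i k \<bullet> column k Xstar)\<bar>)"
  have hb1: "\<bar>Term1 W\<bar> \<le> C1" if "norm W = 1" for W
  proof -
    have "\<bar>Term1 W\<bar> \<le> C1 * norm W"
      unfolding Term1_def[rule_format] bk_def C1_def by (rule lin_bound)
    with that show ?thesis by simp
  qed
  have hb2: "\<bar>Term2 W\<bar> \<le> C2" if "norm W = 1" for W
  proof -
    have t2: "Term2 W = (\<Sum>i\<in>UNIV. \<Sum>k\<in>UNIV. (a i k \<bullet> (W *v bk k)) * ((c i k * chat i k - 1) * (a i k \<bullet> column k Xstar)))"
      unfolding Term2_def[rule_format] bk_def by (simp add: ac_simps)
    have "\<bar>Term2 W\<bar> \<le> C2 * norm W"
      unfolding t2 C2_def by (rule lin_bound)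
    with that show ?thesis by simp
  qed
  have bd1: "bdd_above {\<bar>Term1 W\<bar> | W. norm W = 1}"
    by (rule bdd_aboveI[of _ C1]) (auto intro: hb1)
  have bd2: "bdd_above {\<bar>Term2 W\<bar> | W. norm W = 1}"
    by (rule bdd_aboveI[of _ C2]) (auto intro: hb2)
  have T3nn: "Term3 W \<ge> 0" for W unfolding Term3_def[rule_format] by (simp add: sum_nonneg)
  have bd3: "bdd_below {Term3 W | W. norm W = 1}"
    unfolding bdd_below_def using T3nn by auto
  have le1: "\<bar>Term1 W\<bar> \<le> S1" if "norm W = 1" for W
    unfolding S1_def by (rule cSup_upper[OF _ bd1]) (use that in auto)
  have le2: "\<bar>Term2 W\<bar> \<le> S2" if "norm W = 1" for W
    unfolding S2_def by (rule cSup_upper[OF _ bd2]) (use that in auto)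
  have le3: "m \<le> Term3 W" if "norm W = 1" for W
    unfolding m_def by (rule cInf_lower[OF _ bd3]) (use that in auto)
  have m0: "m > 0" using Term3_pos m_def by simp
  have S10: "S1 \<ge> 0" using le1[OF W0] by linarith
  have S20: "S2 \<ge> 0" using le2[OF W0] by linarith
  have MT: "MainTerm = (S1 + S2) / m" using MainTerm_def S1_def S2_def m_def by simp
  have MT0: "MainTerm \<ge> 0" using MT S10 S20 m0 by simp
  have sc1: "Term1 (t *\<^sub>R W) = t * Term1 W" for t W
    unfolding Term1_def[rule_format] by (simp add: scaleR_mv sum_distrib_left algebra_simps)
  have sc2: "Term2 (t *\<^sub>R W) = t * Term2 W" for t W
    unfolding Term2_def[rule_format] by (simp add: scaleR_mv sum_distrib_left algebra_simps)
  have sc3: "Term3 (t *\<^sub>R W) = t\<^sup>2 * Term3 W" for t W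
    unfolding Term3_def[rule_format] by (simp add: scaleR_mv sum_distrib_left algebra_simps power2_eq_square)
  have nD: "norm D \<le> MainTerm"
  proof (cases "D = 0")
    case True then show ?thesis using MT0 by simp
  next
    case False
    define W where "W = (1 / norm D) *\<^sub>R D"
    have nW: "norm W = 1" using False by (simp add: W_def)
    have DW: "D = norm D *\<^sub>R W" using False by (simp add: W_def)
    have "(norm D)\<^sup>2 * Term3 W = norm D * (Term2 W - Term1 W)"
      using key DW sc1 sc2 sc3 by (metis right_diff_distrib)
    then have "norm D * Term3 W = Term2 W - Term1 W" using False by (simp add: power2_eq_square)
    also have "\<dots> \<le> S1 + S2" using le1[OF nW] le2[OF nW] by linarith
    finally have "norm D * m \<le> S1 + S2"
      using le3[OF nW] by (meson mult_left_mono norm_ge_zero order_trans)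
    then show ?thesis using MT m0 by (simp add: pos_le_divide_eq)
  qed
  define \<sigma> where "\<sigma> = sigma_min (Ustar ** Sigma ** Bstar ** transpose B)"
  have bds: "bdd_below {norm (G *v x) | x. norm x = 1}" by (rule bdd_belowI[of _ 0]) auto
  have sig: "\<sigma> * norm z \<le> norm (G *v z)" for z
  proof (cases "z = 0")
    case True then show ?thesis by simp
  next
    case False
    define w where "w = (1 / norm z) *\<^sub>R z"
    have "norm w = 1" using False by (simp add: w_def)
    then have "\<sigma> \<le> norm (G *v w)" unfolding \<sigma>_def sigma_min_def G_def[symmetric]
      by (intro cInf_lower[OF _ bds]) auto
    also have "\<dots> = norm (G *v z) / norm z" using False
      by (simp add: w_def matrix_vector_mult_scaleR)
    finally show ?thesis using False by (simp add: pos_le_divide_eq)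
  qed
  have sgap: "\<sigma> > MainTerm" using gap \<sigma>_def by simp
  have spos: "\<sigma> > 0" using sgap MT0 by linarith
  have Ustar_iso: "norm (Ustar *v w) = norm w" for w
    using Ustar_on isom unfolding orthonormal_cols_def by blast
  have injM: "inj ((*v) M)"
  proof (rule injI)
    fix x1 x2 assume "M *v x1 = M *v x2"
    then have "M *v (x1 - x2) = 0" by (simp add: matrix_vector_mult_diff_distrib)
    then have "G *v (x1 - x2) = 0" by (simp add: GM matrix_vector_mul_assoc[symmetric])
    then have "\<sigma> * norm (x1 - x2) \<le> 0" using sig[of "x1 - x2"] by simp
    then show "x1 = x2" using spos by (simp add: mult_le_0_iff)
  qed
  then obtain M' where "M' ** M = mat 1" using matrix_left_invertible_injective by blast
  then have MM': "M ** M' = mat 1" using matrix_left_right_inverse by blast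
  have Uplus_on: "transpose Uplus ** Uplus = mat 1" using QR(2) orthonormal_cols_def by blast
  have bound: "norm (((mat 1 - Uplus ** transpose Uplus) ** Ustar) *v x) \<le> (MainTerm / \<sigma>) * norm x" for x
  proof -
    define z where "z = M' *v x"
    have Mz: "M *v z = x" by (simp add: z_def matrix_vector_mul_assoc MM')
    have Gz: "Ustar *v x = Uhat *v z - D *v z"
      by (simp add: D_def GM matrix_vector_mult_diff_rdistrib Mz matrix_vector_mul_assoc[symmetric])
    have Pu: "P (Uhat *v z) = Uhat *v z"
      by (simp add: P_def QR(1) matrix_vector_mul_assoc)
        (metis matrix_mul_assoc Uplus_on matrix_mul_lid)
    have "((mat 1 - Uplus ** transpose Uplus) ** Ustar) *v x = Ustar *v x - P (Ustar *v x)"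
      by (simp add: P_def matrix_vector_mul_assoc[symmetric] matrix_vector_mult_diff_rdistrib)
    also have "\<dots> = - (D *v z - P (D *v z))"
      using Pu unfolding Gz by (simp add: P_def matrix_vector_mult_diff_distrib)
    finally have "norm (((mat 1 - Uplus ** transpose Uplus) ** Ustar) *v x) = norm (D *v z - P (D *v z))"
      by (simp add: norm_minus_commute)
    also have "\<dots> \<le> norm (D *v z)" unfolding P_def by (rule proj_le[OF Uplus_on])
    also have "\<dots> \<le> norm D * norm z" by (rule frob_le)
    also have "\<dots> \<le> MainTerm * norm z" by (rule mult_right_mono[OF nD]) simp
    also have "\<dots> \<le> MainTerm * (norm x / \<sigma>)"
    proof (rule mult_left_mono[OF _ MT0])
      have "\<sigma> * norm z \<le> norm x"
        using sig[of z] by (simp add: GM matrix_vector_mul_assoc[symmetric] Mz Ustar_iso)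
      then show "norm z \<le> norm x / \<sigma>" using spos by (simp add: pos_le_divide_eq mult.commute)
    qed
    finally show ?thesis by simp
  qed
  have "SE Uplus Ustar \<le> MainTerm / \<sigma>"
    unfolding SE_def spec_norm_def by (rule onorm_le) (rule bound)
  also have "\<dots> \<le> MainTerm / (\<sigma> - MainTerm)"
    by (rule frac_le) (use MT0 sgap in auto)
  finally show ?thesis unfolding \<sigma>_def .
qed

end
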